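(* If $\mathfrak{g}$ is a product by generators, then $\dim\mathfrak{g}\ge 10$.
   Context: All Lie algebras are finite-dimensional, complex, nilpotent and nonabelian. Product by generators of two algebras $\mathfrak{g}_1,\mathfrak{g}_2$: take bases $\{X_1,\dots,X_{m_1}\}$, $\{X'_1,\dots,X'_{m_2}\}$ such that $X_1,\dots,X_{n_1}$ generate $\mathfrak{g}_1$ and $X_{n_1+1},\dots,X_{m_1}$ span $[\mathfrak{g}_1,\mathfrak{g}_1]$, and similarly for $\mathfrak{g}_2$ with $n_2$ generators; $\mathfrak{g}_1\underline{\times}\mathfrak{g}_2$ is the Lie algebra on $\mathfrak{g}_1\oplus\mathfrak{g}_2\oplus\langle Z_1,\dots,Z_{n_1n_2}\rangle$ with the brackets of $\mathfrak{g}_1$ and of $\mathfrak{g}_2$, $[X_i,X'_j]=Z_{(i-1)n_2+j}$ for $i\le n_1$, $j\le n_2$, $[X_i,X'_j]=0$ otherwise, and the $Z_k$ central. A nilpotent Lie algebra $\mathfrak{g}$ is a product by generators if there exist (nonabelian) subalgebras $\mathfrak{h}_1,\mathfrak{h}_2$ with $\mathfrak{g}\cong\mathfrak{h}_1\underline{\times}\mathfrak{h}_2$. *)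

theory Defs
  imports Complex_Main "HOL-Library.Function_Algebras" "HOL-Library.Product_Plus"
begin

text \<open>A complex Lie algebra is modelled as a pair (V, br) where V is a linear subspace
  of an ambient complex vector space (given by an explicit scalar multiplication sc
  satisfying the vector_space axioms) and br is a bracket closed on V.\<close>

definition lie_alg :: "(complex \<Rightarrow> 'a::ab_group_add \<Rightarrow> 'a) \<Rightarrow> 'a set \<Rightarrow> ('a \<Rightarrow> 'a \<Rightarrow> 'a) \<Rightarrow> bool" where
  "lie_alg sc V br \<longleftrightarrow>
     vector_space sc \<and> module.subspace sc V \<and>
     (\<exists>B. finite B \<and> B \<subseteq> V \<and> module.span sc B = V) \<and>
     (\<forall>x\<in>V. \<forall>y\<in>V. br x y \<in> V) \<and>
     (\<forall>x\<in>V. \<forall>y\<in>V. \<forall>z\<in>V. br (x + y) z = br x z + br y z) \<and>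
     (\<forall>x\<in>V. \<forall>y\<in>V. \<forall>c. br (sc c x) y = sc c (br x y)) \<and>
     (\<forall>x\<in>V. \<forall>y\<in>V. \<forall>z\<in>V. br x (y + z) = br x y + br x z) \<and>
     (\<forall>x\<in>V. \<forall>y\<in>V. \<forall>c. br x (sc c y) = sc c (br x y)) \<and>
     (\<forall>x\<in>V. br x x = 0) \<and>
     (\<forall>x\<in>V. \<forall>y\<in>V. \<forall>z\<in>V. br x (br y z) + br y (br z x) + br z (br x y) = 0)"

fun lcs :: "(complex \<Rightarrow> 'a::ab_group_add \<Rightarrow> 'a) \<Rightarrow> 'a set \<Rightarrow> ('a \<Rightarrow> 'a \<Rightarrow> 'a) \<Rightarrow> nat \<Rightarrow> 'a set" where
  "lcs sc V br 0 = V"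
| "lcs sc V br (Suc k) = module.span sc {br x y | x y. x \<in> V \<and> y \<in> lcs sc V br k}"

definition nilpotent_lie :: "(complex \<Rightarrow> 'a::ab_group_add \<Rightarrow> 'a) \<Rightarrow> 'a set \<Rightarrow> ('a \<Rightarrow> 'a \<Rightarrow> 'a) \<Rightarrow> bool" where
  "nilpotent_lie sc V br \<longleftrightarrow> (\<exists>k. lcs sc V br k = {0})"

definition nonabelian_lie :: "'a set \<Rightarrow> ('a \<Rightarrow> 'a \<Rightarrow> 'a::zero) \<Rightarrow> bool" where
  "nonabelian_lie V br \<longleftrightarrow> (\<exists>x\<in>V. \<exists>y\<in>V. br x y \<noteq> 0)"

definition derived :: "(complex \<Rightarrow> 'a::ab_group_add \<Rightarrow> 'a) \<Rightarrow> 'a set \<Rightarrow> ('a \<Rightarrow> 'a \<Rightarrow> 'a) \<Rightarrow> 'a set" where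
  "derived sc V br = module.span sc {br x y | x y. x \<in> V \<and> y \<in> V}"

definition is_subalgebra :: "(complex \<Rightarrow> 'a::ab_group_add \<Rightarrow> 'a) \<Rightarrow> 'a set \<Rightarrow> ('a \<Rightarrow> 'a \<Rightarrow> 'a) \<Rightarrow> 'a set \<Rightarrow> bool" where
  "is_subalgebra sc V br H \<longleftrightarrow> H \<subseteq> V \<and> module.subspace sc H \<and> (\<forall>x\<in>H. \<forall>y\<in>H. br x y \<in> H)"

definition gen_subalg :: "(complex \<Rightarrow> 'a::ab_group_add \<Rightarrow> 'a) \<Rightarrow> 'a set \<Rightarrow> ('a \<Rightarrow> 'a \<Rightarrow> 'a) \<Rightarrow> 'a set \<Rightarrow> 'a set" where
  "gen_subalg sc V br S = \<Inter>{H. is_subalgebra sc V br H \<and> S \<subseteq> H}"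

definition adapted_basis :: "(complex \<Rightarrow> 'a::ab_group_add \<Rightarrow> 'a) \<Rightarrow> 'a set \<Rightarrow> ('a \<Rightarrow> 'a \<Rightarrow> 'a) \<Rightarrow> 'a list \<Rightarrow> nat \<Rightarrow> bool" where
  "adapted_basis sc V br X n \<longleftrightarrow>
     distinct X \<and> \<not> module.dependent sc (set X) \<and> set X \<subseteq> V \<and> module.span sc (set X) = V \<and>
     n \<le> length X \<and>
     gen_subalg sc V br (set (take n X)) = V \<and>
     module.span sc (set (drop n X)) = derived sc V br"

definition coord :: "(complex \<Rightarrow> 'a::ab_group_add \<Rightarrow> 'a) \<Rightarrow> 'a list \<Rightarrow> nat \<Rightarrow> 'a \<Rightarrow> complex" where
  "coord sc X i x = module.representation sc (set X) x (X ! i)"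

text \<open>The product by generators g1 x g2 realised on triples (x1, x2, z) with x1 in g1,
  x2 in g2 and z in span{Z_0,...,Z_(n1*n2-1)} (z :: nat => complex with z k = 0 for
  k >= n1*n2). Indices are 0-based: [X_i, X'_j] = Z_(i*n2+j) for i < n1, j < n2.\<close>
definition pbg_sc :: "(complex \<Rightarrow> 'a::ab_group_add \<Rightarrow> 'a) \<Rightarrow> complex \<Rightarrow> 'a \<times> 'a \<times> (nat \<Rightarrow> complex) \<Rightarrow> 'a \<times> 'a \<times> (nat \<Rightarrow> complex)" where
  "pbg_sc sc c p = (sc c (fst p), sc c (fst (snd p)), (\<lambda>k. c * snd (snd p) k))"

definition pbg_carrier :: "'a set \<Rightarrow> 'a set \<Rightarrow> nat \<Rightarrow> nat \<Rightarrow> ('a \<times> 'a \<times> (nat \<Rightarrow> complex)) set" where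
  "pbg_carrier H1 H2 n1 n2 = {(x1, x2, z). x1 \<in> H1 \<and> x2 \<in> H2 \<and> (\<forall>k\<ge>n1 * n2. z k = 0)}"

definition pbg_br :: "(complex \<Rightarrow> 'a::ab_group_add \<Rightarrow> 'a) \<Rightarrow> ('a \<Rightarrow> 'a \<Rightarrow> 'a) \<Rightarrow> 'a list \<Rightarrow> nat \<Rightarrow> 'a list \<Rightarrow> nat \<Rightarrow>
    'a \<times> 'a \<times> (nat \<Rightarrow> complex) \<Rightarrow> 'a \<times> 'a \<times> (nat \<Rightarrow> complex) \<Rightarrow> 'a \<times> 'a \<times> (nat \<Rightarrow> complex)" where
  "pbg_br sc br X1 n1 X2 n2 p q =
     (case p of (x1, x2, _) \<Rightarrow> case q of (y1, y2, _) \<Rightarrow>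
       (br x1 y1, br x2 y2,
        (\<lambda>k. if k < n1 * n2 then
               coord sc X1 (k div n2) x1 * coord sc X2 (k mod n2) y2
             - coord sc X1 (k div n2) y1 * coord sc X2 (k mod n2) x2
             else 0)))"

definition lie_iso :: "(complex \<Rightarrow> 'a::ab_group_add \<Rightarrow> 'a) \<Rightarrow> 'a set \<Rightarrow> ('a \<Rightarrow> 'a \<Rightarrow> 'a) \<Rightarrow>
    (complex \<Rightarrow> 'b::ab_group_add \<Rightarrow> 'b) \<Rightarrow> 'b set \<Rightarrow> ('b \<Rightarrow> 'b \<Rightarrow> 'b) \<Rightarrow> bool" where
  "lie_iso sc V br sc' W br' \<longleftrightarrow>
     (\<exists>f. bij_betw f V W \<and>
          (\<forall>x\<in>V. \<forall>y\<in>V. f (x + y) = f x + f y) \<and>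
          (\<forall>x\<in>V. \<forall>c. f (sc c x) = sc' c (f x)) \<and>
          (\<forall>x\<in>V. \<forall>y\<in>V. f (br x y) = br' (f x) (f y)))"

definition product_by_generators :: "(complex \<Rightarrow> 'a::ab_group_add \<Rightarrow> 'a) \<Rightarrow> 'a set \<Rightarrow> ('a \<Rightarrow> 'a \<Rightarrow> 'a) \<Rightarrow> bool" where
  "product_by_generators sc V br \<longleftrightarrow>
     (\<exists>H1 H2 X1 n1 X2 n2.
        is_subalgebra sc V br H1 \<and> is_subalgebra sc V br H2 \<and>
        nonabelian_lie H1 br \<and> nonabelian_lie H2 br \<and>
        adapted_basis sc H1 br X1 n1 \<and> adapted_basis sc H2 br X2 n2 \<and>
        lie_iso sc V br (pbg_sc sc) (pbg_carrier H1 H2 n1 n2) (pbg_br sc br X1 n1 X2 n2))"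

end

theory Submission
  imports Defs
begin


lemma sum_fun_apply: "(sum f A) (k::'b) = (\<Sum>x\<in>A. (f x) k :: 'c::comm_monoid_add)"
  by (induction A rule: infinite_finite_induct) auto

lemma card_le_dim_aux:
  assumes vs: "vector_space sc" and B0: "finite B0" "V \<subseteq> module.span sc B0"
    and T: "T \<subseteq> V" "\<not> module.dependent sc T"
  shows "card T \<le> vector_space.dim sc V"
proof -
  interpret vector_space sc by (rule vs)
  obtain B where B: "B \<subseteq> V" "independent B" "V \<subseteq> span B" "card B = dim V"
    by (rule basis_exists)
  have "finite B" using independent_span_bound[OF B0(1) B(2)] B(1) B0(2) by auto
  then have "card T \<le> card B" using independent_span_bound[OF _ T(2)] T(1) B(3) by auto
  then show ?thesis using B(4) by simp
qed

lemma pullback_indep: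
  assumes vs: "vector_space sc" and sub: "module.subspace sc V"
    and add: "\<forall>x\<in>V. \<forall>y\<in>V. f (x + y) = f x + f y"
    and hom: "\<forall>x\<in>V. \<forall>c. f (sc c x) = sc' c (f x)"
    and T: "T \<subseteq> V" and inj: "inj_on f T"
    and ind: "\<not> module.dependent sc' (f ` T)" and m': "module sc'"
  shows "\<not> module.dependent sc T"
proof
  interpret vector_space sc by (rule vs)
  assume "dependent T"
  then obtain t u v0 where t: "finite t" "t \<subseteq> T" "(\<Sum>v\<in>t. sc (u v) v) = 0" "v0 \<in> t" "u v0 \<noteq> 0"
    unfolding dependent_explicit by blast
  have f0: "f 0 = 0"
  proof -
    have "f (0 + 0) = f 0 + f 0" using add subspace_0[OF sub] by blast
    then show ?thesis by simp
  qed
  have gen: "s \<subseteq> V \<Longrightarrow> f (\<Sum>v\<in>s. sc (u v) v) = (\<Sum>v\<in>s. sc' (u v) (f v))" if "finite s" for s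
    using that
  proof (induction s rule: finite_induct)
    case empty then show ?case using f0 by simp
  next
    case (insert a s)
    have a: "a \<in> V" using insert by auto
    have sV: "(\<Sum>v\<in>s. sc (u v) v) \<in> V"
      using insert(4) by (intro subspace_sum[OF sub]) (auto intro: subspace_scale[OF sub])
    have "f (\<Sum>v\<in>insert a s. sc (u v) v) = f (sc (u a) a + (\<Sum>v\<in>s. sc (u v) v))"
      using insert by simp
    also have "\<dots> = f (sc (u a) a) + f (\<Sum>v\<in>s. sc (u v) v)"
      using add sV subspace_scale[OF sub a] by blast
    also have "\<dots> = sc' (u a) (f a) + (\<Sum>v\<in>s. sc' (u v) (f v))"
      using hom a insert by auto
    finally show ?case using insert by simp
  qed
  have "(\<Sum>v\<in>t. sc' (u v) (f v)) = 0" using gen[OF t(1)] t T f0 by auto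
  moreover have injt: "inj_on f t" using inj t(2) inj_on_subset by blast
  ultimately have "(\<Sum>w\<in>f ` t. sc' (u (inv_into t f w)) w) = 0"
    by (simp add: sum.reindex)
  moreover have "f ` t \<subseteq> f ` T" using t by auto
  moreover have "u (inv_into t f (f v0)) \<noteq> 0" using t injt by simp
  ultimately have "module.dependent sc' (f ` T)"
    unfolding module.dependent_explicit[OF m'] using t(1) t(4)
    by (intro exI[of _ "f ` t"] exI[of _ "\<lambda>w. u (inv_into t f w)"]) auto
  with ind show False by simp
qed

lemma pbg_module: assumes vs: "vector_space sc" shows "module (pbg_sc sc)"
proof -
  interpret vector_space sc by (rule vs)
  show ?thesis
    by unfold_locales (auto simp: pbg_sc_def scale_right_distrib scale_left_distrib fun_eq_iff algebra_simps)
qed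

lemma adapted_len:
  assumes la: "lie_alg sc V br" and sa: "is_subalgebra sc V br H"
    and na: "nonabelian_lie H br" and ab: "adapted_basis sc H br X n"
  shows "2 \<le> n \<and> n < length X"
proof -
  have vs: "vector_space sc" using la unfolding lie_alg_def by blast
  interpret vector_space sc by (rule vs)
  have subV: "subspace V" using la unfolding lie_alg_def by blast
  have HV: "H \<subseteq> V" and subH: "subspace H" using sa unfolding is_subalgebra_def by auto
  from na obtain x y where xy: "x \<in> H" "y \<in> H" "br x y \<noteq> 0" unfolding nonabelian_lie_def by blast
  have wd: "br x y \<in> derived sc H br" unfolding derived_def
    using xy by (intro span_base) blast
  have ab': "distinct X" "set X \<subseteq> H" "n \<le> length X" "gen_subalg sc H br (set (take n X)) = H"
    "span (set (drop n X)) = derived sc H br"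
    using ab unfolding adapted_basis_def by auto
  have nl: "n < length X"
  proof (rule ccontr)
    assume "\<not> n < length X"
    then have "drop n X = []" by simp
    then have "derived sc H br = {0}" using ab'(5) by simp
    with wd xy(3) show False by simp
  qed
  moreover have "2 \<le> n"
  proof (rule ccontr)
    assume n1: "\<not> 2 \<le> n"
    define a where "a = X ! 0"
    have aH: "a \<in> H" using nl ab'(2) unfolding a_def by (meson le_less_trans nth_mem subsetD zero_le)
    have aV: "a \<in> V" using aH HV by auto
    have tk: "set (take n X) \<subseteq> {a}"
    proof (cases n)
      case 0 then show ?thesis by simp
    next
      case (Suc m)
      then have "n = 1" using n1 by simp
      then show ?thesis unfolding a_def using nl by (cases X) auto
    qed
    have zero: "br p q = 0" if pq: "p \<in> span {a}" "q \<in> span {a}" for p q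
    proof -
      obtain c d where "p = sc c a" "q = sc d a" using pq unfolding span_singleton by auto
      moreover have "br (sc c a) (sc d a) = sc c (br a (sc d a))"
        using la aV subspace_scale[OF subV aV] unfolding lie_alg_def by blast
      moreover have "br a (sc d a) = sc d (br a a)"
        using la aV unfolding lie_alg_def by blast
      moreover have "br a a = 0" using la aV unfolding lie_alg_def by blast
      ultimately show ?thesis by simp
    qed
    have sub: "is_subalgebra sc H br (span {a})"
    proof -
      have "span {a} \<subseteq> H" using aH subH span_minimal[of "{a}" H] by blast
      moreover have "\<forall>p\<in>span {a}. \<forall>q\<in>span {a}. br p q \<in> span {a}"
        using zero subspace_0[OF subspace_span] by simp
      ultimately show ?thesis unfolding is_subalgebra_def by simp
    qed
    have "span {a} \<in> {Hs. is_subalgebra sc H br Hs \<and> set (take n X) \<subseteq> Hs}"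
      using sub tk span_superset[of "{a}"] by blast
    then have "gen_subalg sc H br (set (take n X)) \<subseteq> span {a}"
      unfolding gen_subalg_def by (rule Inter_lower)
    then have "H \<subseteq> span {a}" using ab'(4) by simp
    with zero xy(1,2) have "br x y = 0" by blast
    with xy(3) show False by simp
  qed
  ultimately show ?thesis by simp
qed



lemma indepW:
  assumes vs: "vector_space sc" and i1: "\<not> module.dependent sc A1" and i2: "\<not> module.dependent sc A2"
  shows "\<not> module.dependent (pbg_sc sc)
     ((\<lambda>x. (x, 0, 0)) ` A1 \<union> (\<lambda>y. (0, y, 0)) ` A2 \<union> (\<lambda>k. (0, 0, \<lambda>j. if j = k then 1 else 0)) ` K)"
    (is "\<not> module.dependent _ (?S1 \<union> ?S2 \<union> ?S3)")
proof
  interpret vector_space sc by (rule vs)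
  interpret W: module "pbg_sc sc" by (rule pbg_module[OF vs])
  assume "W.dependent (?S1 \<union> ?S2 \<union> ?S3)"
  then obtain t u v0 where t: "finite t" "t \<subseteq> ?S1 \<union> ?S2 \<union> ?S3"
      "(\<Sum>v\<in>t. pbg_sc sc (u v) v) = 0" "v0 \<in> t" "u v0 \<noteq> 0"
    unfolding W.dependent_explicit by blast
  have h1: "(\<Sum>v\<in>t. sc (u v) (fst v)) = 0"
  proof -
    have "fst (\<Sum>v\<in>t. pbg_sc sc (u v) v) = 0" using t(3) by simp
    then show ?thesis by (simp add: fst_sum pbg_sc_def)
  qed
  have h2: "(\<Sum>v\<in>t. sc (u v) (fst (snd v))) = 0"
  proof -
    have "fst (snd (\<Sum>v\<in>t. pbg_sc sc (u v) v)) = 0" using t(3) by simp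
    then show ?thesis by (simp add: fst_sum snd_sum pbg_sc_def)
  qed
  have h3: "(\<Sum>v\<in>t. u v * snd (snd v) k) = 0" for k
  proof -
    have "snd (snd (\<Sum>v\<in>t. pbg_sc sc (u v) v)) k = 0" using t(3) by simp
    then show ?thesis by (simp add: snd_sum pbg_sc_def sum_fun_apply)
  qed
  have "v0 \<in> ?S1 \<or> v0 \<in> ?S2 \<or> v0 \<in> ?S3" using t by blast
  then show False
  proof (elim disjE)
    assume "v0 \<in> ?S1"
    then obtain x0 where x0: "x0 \<in> A1" "v0 = (x0, 0, 0)" by blast
    define t1 where "t1 = t \<inter> ?S1"
    have "(\<Sum>v\<in>t. sc (u v) (fst v)) = (\<Sum>v\<in>t1. sc (u v) (fst v))"
      using t(1,2) unfolding t1_def by (intro sum.mono_neutral_right) auto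
    also have "\<dots> = (\<Sum>v\<in>t1. sc (u (fst v, 0, 0)) (fst v))"
      unfolding t1_def by (intro sum.cong) auto
    also have "\<dots> = (\<Sum>x\<in>fst ` t1. sc (u (x, 0, 0)) x)"
    proof -
      have "inj_on fst t1" unfolding t1_def by (auto simp: inj_on_def)
      then show ?thesis by (simp add: sum.reindex)
    qed
    finally have s: "(\<Sum>x\<in>fst ` t1. sc (u (x, 0, 0)) x) = 0" using h1 by simp
    have "fst ` t1 \<subseteq> A1" unfolding t1_def by auto
    moreover have "x0 \<in> fst ` t1" using x0 t(4) unfolding t1_def by force
    moreover have "finite (fst ` t1)" using t(1) unfolding t1_def by simp
    ultimately have "u (x0, 0, 0) = 0" using independentD[OF i1 _ _ s] by blast
    with x0 t(5) show False by simp
  next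
    assume "v0 \<in> ?S2"
    then obtain x0 where x0: "x0 \<in> A2" "v0 = (0, x0, 0)" by blast
    define t1 where "t1 = t \<inter> ?S2"
    have "(\<Sum>v\<in>t. sc (u v) (fst (snd v))) = (\<Sum>v\<in>t1. sc (u v) (fst (snd v)))"
      using t(1,2) unfolding t1_def by (intro sum.mono_neutral_right) auto
    also have "\<dots> = (\<Sum>v\<in>t1. sc (u (0, fst (snd v), 0)) (fst (snd v)))"
      unfolding t1_def by (intro sum.cong) auto
    also have "\<dots> = (\<Sum>x\<in>(\<lambda>v. fst (snd v)) ` t1. sc (u (0, x, 0)) x)"
    proof -
      have "inj_on (\<lambda>v. fst (snd v)) t1" unfolding t1_def by (auto simp: inj_on_def)
      then show ?thesis by (simp add: sum.reindex)
    qed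
    finally have s: "(\<Sum>x\<in>(\<lambda>v. fst (snd v)) ` t1. sc (u (0, x, 0)) x) = 0" using h2 by simp
    have "(\<lambda>v. fst (snd v)) ` t1 \<subseteq> A2" unfolding t1_def by auto
    moreover have "x0 \<in> (\<lambda>v. fst (snd v)) ` t1" using x0 t(4) unfolding t1_def by force
    moreover have "finite ((\<lambda>v. fst (snd v)) ` t1)" using t(1) unfolding t1_def by simp
    ultimately have "u (0, x0, 0) = 0" using independentD[OF i2 _ _ s] by blast
    with x0 t(5) show False by simp
  next
    assume "v0 \<in> ?S3"
    then obtain k0 where k0: "v0 = (0, 0, \<lambda>j. if j = k0 then 1 else 0)" by blast
    have "(\<Sum>v\<in>t. u v * snd (snd v) k0) = (\<Sum>v\<in>t. if v = v0 then u v0 else 0)"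
    proof (intro sum.cong refl)
      fix v assume v: "v \<in> t"
      show "u v * snd (snd v) k0 = (if v = v0 then u v0 else 0)"
      proof (cases "v = v0")
        case True then show ?thesis using k0 by simp
      next
        case False
        have "v \<in> ?S1 \<union> ?S2 \<union> ?S3" using v t(2) by blast
        then have "snd (snd v) k0 = 0"
        proof (elim UnE)
          assume "v \<in> ?S3"
          then obtain k where k: "v = (0, 0, \<lambda>j. if j = k then 1 else 0)" by blast
          with False k0 have "k \<noteq> k0" by auto
          with k show ?thesis by simp
        qed auto
        then show ?thesis using False by simp
      qed
    qed
    also have "\<dots> = u v0" using t(1,4) by simp
    finally show False using h3[of k0] t(5) by simp
  qed
qed



theorem mainTheorem7:
  fixes sc :: "complex \<Rightarrow> 'a::ab_group_add \<Rightarrow> 'a"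
    and V :: "'a set" and br :: "'a \<Rightarrow> 'a \<Rightarrow> 'a"
  assumes "lie_alg sc V br"
    and "nilpotent_lie sc V br"
    and "nonabelian_lie V br"
    and "product_by_generators sc V br"
  shows "vector_space.dim sc V \<ge> 10"
proof -
  have la: "lie_alg sc V br" by fact
  have vs: "vector_space sc" using la unfolding lie_alg_def by blast
  interpret vector_space sc by (rule vs)
  have subV: "subspace V" using la unfolding lie_alg_def by blast
  obtain B0 where B0: "finite B0" "B0 \<subseteq> V" "span B0 = V" using la unfolding lie_alg_def by blast
  obtain H1 H2 X1 n1 X2 n2 where P:
    "is_subalgebra sc V br H1" "is_subalgebra sc V br H2"
    "nonabelian_lie H1 br" "nonabelian_lie H2 br"
    "adapted_basis sc H1 br X1 n1" "adapted_basis sc H2 br X2 n2"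
    "lie_iso sc V br (pbg_sc sc) (pbg_carrier H1 H2 n1 n2) (pbg_br sc br X1 n1 X2 n2)"
    using assms(4) unfolding product_by_generators_def by blast
  define W where "W = pbg_carrier H1 H2 n1 n2"
  obtain f where f: "bij_betw f V W" "\<forall>x\<in>V. \<forall>y\<in>V. f (x + y) = f x + f y"
    "\<forall>x\<in>V. \<forall>c. f (sc c x) = pbg_sc sc c (f x)"
    using P(7) unfolding lie_iso_def W_def by blast
  have L1: "2 \<le> n1 \<and> n1 < length X1" using adapted_len[OF la P(1) P(3) P(5)] .
  have L2: "2 \<le> n2 \<and> n2 < length X2" using adapted_len[OF la P(2) P(4) P(6)] .
  have ab1: "distinct X1" "independent (set X1)" "set X1 \<subseteq> H1"
    using P(5) unfolding adapted_basis_def by auto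
  have ab2: "distinct X2" "independent (set X2)" "set X2 \<subseteq> H2"
    using P(6) unfolding adapted_basis_def by auto
  have z1: "0 \<in> H1" using P(1) subspace_0 unfolding is_subalgebra_def by blast
  have z2: "0 \<in> H2" using P(2) subspace_0 unfolding is_subalgebra_def by blast
  define N where "N = n1 * n2"
  have N4: "4 \<le> N" unfolding N_def using L1 L2 mult_le_mono[of 2 n1 2 n2] by simp
  define S1 where "S1 = (\<lambda>x. (x, 0::'a, 0::nat\<Rightarrow>complex)) ` set X1"
  define S2 where "S2 = (\<lambda>y. (0::'a, y, 0::nat\<Rightarrow>complex)) ` set X2"
  define S3 where "S3 = (\<lambda>k. (0::'a, 0::'a, \<lambda>j. if j = k then 1 else (0::complex))) ` {..<N}"
  define S where "S = S1 \<union> S2 \<union> S3"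
  have indS: "\<not> module.dependent (pbg_sc sc) S"
    unfolding S_def S1_def S2_def S3_def by (rule indepW[OF vs ab1(2) ab2(2)])
  have SW: "S \<subseteq> W"
    unfolding S_def S1_def S2_def S3_def W_def pbg_carrier_def N_def
    using ab1(3) ab2(3) z1 z2 by auto
  have n01: "0 \<notin> set X1" using ab1(2) dependent_zero by blast
  have n02: "0 \<notin> set X2" using ab2(2) dependent_zero by blast
  have c1: "card S1 = length X1" unfolding S1_def
    by (subst card_image) (auto simp: inj_on_def distinct_card ab1(1))
  have c2: "card S2 = length X2" unfolding S2_def
    by (subst card_image) (auto simp: inj_on_def distinct_card ab2(1))
  have c3: "card S3 = N" unfolding S3_def
    by (subst card_image) (auto simp: inj_on_def fun_eq_iff split: if_splits)
  have d12: "S1 \<inter> S2 = {}" unfolding S1_def S2_def using n01 by auto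
  have d3: "(S1 \<union> S2) \<inter> S3 = {}" unfolding S1_def S2_def S3_def using n01 n02 by auto
  have cS: "card S = length X1 + length X2 + N"
  proof -
    have f: "finite S1" "finite S2" "finite S3" unfolding S1_def S2_def S3_def by auto
    have "card S = card (S1 \<union> S2) + card S3" unfolding S_def
      using card_Un_disjoint[of "S1 \<union> S2" S3] f d3 by simp
    also have "card (S1 \<union> S2) = card S1 + card S2" using card_Un_disjoint[of S1 S2] f d12 by simp
    finally show ?thesis using c1 c2 c3 by simp
  qed
  define T where "T = inv_into V f ` S"
  have SfV: "S \<subseteq> f ` V" using SW f(1) unfolding bij_betw_def by simp
  have TV: "T \<subseteq> V" unfolding T_def using SfV by (auto intro: inv_into_into)
  have fT: "f ` T = S" 
  proof -
    have "f ` inv_into V f ` S = (\<lambda>x. f (inv_into V f x)) ` S" by (simp add: image_image)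
    also have "\<dots> = (\<lambda>x. x) ` S" using SfV by (intro image_cong refl) (auto simp: f_inv_into_f)
    finally show ?thesis by (simp add: T_def)
  qed
  have injT: "inj_on f T" using TV f(1) unfolding bij_betw_def by (blast intro: inj_on_subset)
  have cT: "card T = card S" unfolding T_def using SfV by (intro card_image inj_on_inv_into)
  have indT: "independent T"
    using pullback_indep[OF vs subV f(2) f(3) TV injT _ pbg_module[OF vs]] fT indS by simp
  have "card T \<le> dim V"
    using card_le_dim_aux[OF vs B0(1) _ TV indT] B0(3) by simp
  then show ?thesis using cT cS L1 L2 N4 by simp
qed

end
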